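(* For every odd $n>1$, the algebra $\mathbf{A}_n$ does not have a minority term.
   Context: Let $[n]=\{1,\dots,n\}$ and let $m$ be the minority operation on $[n]$ given by $m(x,y,z)=x$ if $y=z$, $m(x,y,z)=y$ if $x=z$, and $m(x,y,z)=z$ otherwise. On $\{0,1,2,3\}$, $+,-$ denote arithmetic modulo 4 and $\oplus$ denotes bitwise XOR of 2-bit binary representations. Let $A_n=[n]\times\{0,1,2,3\}$. For $i\in[n]$ define the ternary operation $t_i$ on $A_n$ by $t_i((a_1,b_1),(a_2,b_2),(a_3,b_3))=(i,\,b_1-b_2+b_3)$ if $a_1=a_2=a_3=i$, and $=(m(a_1,a_2,a_3),\,b_1\oplus b_2\oplus b_3)$ otherwise. The algebra $\mathbf{A}_n$ has universe $A_n$ and basic operations $t_1,\dots,t_n$. A minority term of an algebra is a ternary term whose interpretation satisfies $m(y,x,x)\approx m(x,y,x)\approx m(x,x,y)\approx y$. *)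

theory Defs
  imports Main
begin

definition minority :: "nat \<Rightarrow> nat \<Rightarrow> nat \<Rightarrow> nat" where
  "minority x y z = (if y = z then x else if x = z then y else z)"

definition carrierA :: "nat \<Rightarrow> (nat \<times> int) set" where
  "carrierA n = {1..n} \<times> {0..3}"

definition t_op :: "nat \<Rightarrow> nat \<times> int \<Rightarrow> nat \<times> int \<Rightarrow> nat \<times> int \<Rightarrow> nat \<times> int" where
  "t_op i p1 p2 p3 =
     (if fst p1 = i \<and> fst p2 = i \<and> fst p3 = i
      then (i, (snd p1 - snd p2 + snd p3) mod 4)
      else (minority (fst p1) (fst p2) (fst p3), xor (xor (snd p1) (snd p2)) (snd p3)))"

datatype tterm = VX | VY | VZ | Op nat tterm tterm tterm

fun wf_term :: "nat \<Rightarrow> tterm \<Rightarrow> bool" where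
  "wf_term n VX = True"
| "wf_term n VY = True"
| "wf_term n VZ = True"
| "wf_term n (Op i s t u) = (i \<in> {1..n} \<and> wf_term n s \<and> wf_term n t \<and> wf_term n u)"

fun eval :: "tterm \<Rightarrow> nat \<times> int \<Rightarrow> nat \<times> int \<Rightarrow> nat \<times> int \<Rightarrow> nat \<times> int" where
  "eval VX x y z = x"
| "eval VY x y z = y"
| "eval VZ x y z = z"
| "eval (Op i s t u) x y z = t_op i (eval s x y z) (eval t x y z) (eval u x y z)"

definition is_minority_term :: "nat \<Rightarrow> tterm \<Rightarrow> bool" where
  "is_minority_term n t \<longleftrightarrow> wf_term n t \<and>
     (\<forall>x\<in>carrierA n. \<forall>y\<in>carrierA n.
        eval t y x x = y \<and> eval t x y x = y \<and> eval t x x y = y)"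

end

theory Submission
  imports Defs
begin

lemma four_cases: "(b::int) \<in> {0..3} \<Longrightarrow> b = 0 \<or> b = 1 \<or> b = 2 \<or> b = 3" by auto

lemma bits3: fixes b1 b2 b3 :: int
  assumes "b1 \<in> {0..3}" "b2 \<in> {0..3}" "b3 \<in> {0..3}"
  shows "xor (xor b1 b2) b3 = 2*((b1 div 2 + b2 div 2 + b3 div 2) mod 2) + (b1+b2+b3) mod 2"
  using four_cases[OF assms(1)] four_cases[OF assms(2)] four_cases[OF assms(3)]
  by (elim disjE) simp_all

lemma mod3: "((A::int) mod 2 + B mod 2 + C mod 2) mod 2 = (A+B+C) mod 2" by presburger
lemma mod4: "((A::int) mod 2 + B mod 2 + C mod 2 + D) mod 2 = (A+B+C+D) mod 2" by presburger

lemma modlin: "((A::int) * x + B * y) mod 2 = ((A mod 2) * x + (B mod 2) * y) mod 2"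
proof -
  have "((A mod 2) * x + (B mod 2) * y) mod 2 = (((A mod 2) * x) mod 2 + ((B mod 2) * y) mod 2) mod 2"
    by (simp add: mod_add_eq)
  also have "\<dots> = ((A * x) mod 2 + (B * y) mod 2) mod 2"
    by (simp add: mod_mult_left_eq)
  also have "\<dots> = (A * x + B * y) mod 2" by (simp add: mod_add_eq)
  finally show ?thesis by simp
qed

lemma mod4le: "(X::int) mod 4 \<le> 3"
proof -
  have "X mod 4 < 4" by simp
  then show ?thesis by linarith
qed

lemma div2w: "(2*W + V mod 2) div 2 = (W::int)" by presburger

lemma mod2w: "(2*W + V mod 2) mod 2 = (V::int) mod 2" by presburger

definition qq :: "int \<Rightarrow> int \<Rightarrow> int \<Rightarrow> int" where
  "qq l1 l2 l3 = (if l1 = l3 \<and> l2 \<noteq> l1 then 1 else 0)"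

lemma mod4_3: fixes b1 b2 b3 :: int
  assumes "b1 \<in> {0..3}" "b2 \<in> {0..3}" "b3 \<in> {0..3}"
  shows "(b1 - b2 + b3) mod 4 = 2*((b1 div 2 + b2 div 2 + b3 div 2 + qq (b1 mod 2) (b2 mod 2) (b3 mod 2)) mod 2) + (b1+b2+b3) mod 2"
  using four_cases[OF assms(1)] four_cases[OF assms(2)] four_cases[OF assms(3)]
  by (elim disjE) (simp_all add: qq_def)

fun cy :: "tterm \<Rightarrow> int" where
  "cy VX = 0" | "cy VY = 1" | "cy VZ = 0" | "cy (Op i s t u) = (cy s + cy t + cy u) mod 2"

fun cz :: "tterm \<Rightarrow> int" where
  "cz VX = 0" | "cz VY = 0" | "cz VZ = 1" | "cz (Op i s t u) = (cz s + cz t + cz u) mod 2"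

lemma cy01: "cy t \<in> {0,1}" by (induction t) auto
lemma cz01: "cz t \<in> {0,1}" by (induction t) auto

definition ev :: "tterm \<Rightarrow> nat \<Rightarrow> int \<Rightarrow> int \<Rightarrow> nat \<times> int" where
  "ev t a l2 l3 = eval t (a,0) (a,l2) (a,l3)"

lemma evA:
  assumes "l2 \<in> {0,1}" "l3 \<in> {0,1}"
  shows "fst (ev t a l2 l3) = a \<and> snd (ev t a l2 l3) \<in> {0..3} \<and>
         snd (ev t a l2 l3) mod 2 = (cy t * l2 + cz t * l3) mod 2"
proof (induction t)
  case VX then show ?case by (simp add: ev_def)
next
  case VY then show ?case using assms by (auto simp: ev_def)
next
  case VZ then show ?case using assms by (auto simp: ev_def)
next
  case (Op i s t u)
  let ?p1 = "ev s a l2 l3" and ?p2 = "ev t a l2 l3" and ?p3 = "ev u a l2 l3"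
  have e: "ev (Op i s t u) a l2 l3 = t_op i ?p1 ?p2 ?p3" by (simp add: ev_def)
  have r1: "snd ?p1 \<in> {0..3}" "snd ?p2 \<in> {0..3}" "snd ?p3 \<in> {0..3}" using Op by auto
  have low: "(snd ?p1 + snd ?p2 + snd ?p3) mod 2 = (cy (Op i s t u) * l2 + cz (Op i s t u) * l3) mod 2"
  proof -
    have "(snd ?p1 + snd ?p2 + snd ?p3) mod 2 = (snd ?p1 mod 2 + snd ?p2 mod 2 + snd ?p3 mod 2) mod 2"
      by (rule mod3[symmetric])
    also have "\<dots> = ((cy s * l2 + cz s * l3) mod 2 + (cy t * l2 + cz t * l3) mod 2 + (cy u * l2 + cz u * l3) mod 2) mod 2"
      using Op by simp
    also have "\<dots> = ((cy s * l2 + cz s * l3) + (cy t * l2 + cz t * l3) + (cy u * l2 + cz u * l3)) mod 2"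
      by (rule mod3)
    also have "\<dots> = ((cy s + cy t + cy u) * l2 + (cz s + cz t + cz u) * l3) mod 2"
      by (rule arg_cong[where f="\<lambda>x. x mod 2"]) (simp add: algebra_simps)
    also have "\<dots> = ((cy s + cy t + cy u) mod 2 * l2 + (cz s + cz t + cz u) mod 2 * l3) mod 2"
      by (rule modlin)
    finally show ?thesis by simp
  qed
  have f: "fst ?p1 = a" "fst ?p2 = a" "fst ?p3 = a" using Op by auto
  show ?case
  proof (cases "a = i")
    case True
    then have eq: "ev (Op i s t u) a l2 l3 = (a, (snd ?p1 - snd ?p2 + snd ?p3) mod 4)"
      using e f by (simp add: t_op_def)
    have "(snd ?p1 - snd ?p2 + snd ?p3) mod 4 mod 2 = (snd ?p1 + snd ?p2 + snd ?p3) mod 2"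
      unfolding mod4_3[OF r1] by (rule mod2w)
    then show ?thesis using eq low mod4le by simp
  next
    case False
    then have eq: "ev (Op i s t u) a l2 l3 = (a, xor (xor (snd ?p1) (snd ?p2)) (snd ?p3))"
      using e f by (simp add: t_op_def minority_def)
    have m: "xor (xor (snd ?p1) (snd ?p2)) (snd ?p3) mod 2 = (snd ?p1 + snd ?p2 + snd ?p3) mod 2"
      unfolding bits3[OF r1] by (rule mod2w)
    have "xor (xor (snd ?p1) (snd ?p2)) (snd ?p3) \<in> {0..3}"
      unfolding bits3[OF r1] by simp
    then show ?thesis using eq low m by simp
  qed
qed

definition hh :: "tterm \<Rightarrow> nat \<Rightarrow> int \<Rightarrow> int \<Rightarrow> int" where
  "hh t a l2 l3 = snd (ev t a l2 l3) div 2"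

definition lw :: "tterm \<Rightarrow> int \<Rightarrow> int \<Rightarrow> int" where
  "lw t l2 l3 = (cy t * l2 + cz t * l3) mod 2"

lemma hh_op:
  assumes "l2 \<in> {0,1}" "l3 \<in> {0,1}"
  shows "hh (Op i s t u) a l2 l3 mod 2 =
    (hh s a l2 l3 + hh t a l2 l3 + hh u a l2 l3 +
      (if a = i then qq (lw s l2 l3) (lw t l2 l3) (lw u l2 l3) else 0)) mod 2"
proof -
  let ?p1 = "ev s a l2 l3" and ?p2 = "ev t a l2 l3" and ?p3 = "ev u a l2 l3"
  have e: "ev (Op i s t u) a l2 l3 = t_op i ?p1 ?p2 ?p3" by (simp add: ev_def)
  note A1 = evA[OF assms, of s a] and A2 = evA[OF assms, of t a] and A3 = evA[OF assms, of u a]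
  have r1: "snd ?p1 \<in> {0..3}" "snd ?p2 \<in> {0..3}" "snd ?p3 \<in> {0..3}" using A1 A2 A3 by auto
  have f: "fst ?p1 = a" "fst ?p2 = a" "fst ?p3 = a" using A1 A2 A3 by auto
  show ?thesis
  proof (cases "a = i")
    case True
    then have eq: "ev (Op i s t u) a l2 l3 = (a, (snd ?p1 - snd ?p2 + snd ?p3) mod 4)"
      using e f by (simp add: t_op_def)
    have lo: "snd ?p1 mod 2 = lw s l2 l3" "snd ?p2 mod 2 = lw t l2 l3" "snd ?p3 mod 2 = lw u l2 l3"
      using A1 A2 A3 by (simp_all add: lw_def)
    have "hh (Op i s t u) a l2 l3 = (hh s a l2 l3 + hh t a l2 l3 + hh u a l2 l3 +
        qq (snd ?p1 mod 2) (snd ?p2 mod 2) (snd ?p3 mod 2)) mod 2"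
      unfolding hh_def eq snd_conv mod4_3[OF r1] by (rule div2w)
    then show ?thesis using True lo by simp
  next
    case False
    then have eq: "ev (Op i s t u) a l2 l3 = (a, xor (xor (snd ?p1) (snd ?p2)) (snd ?p3))"
      using e f by (simp add: t_op_def minority_def)
    have "hh (Op i s t u) a l2 l3 = (hh s a l2 l3 + hh t a l2 l3 + hh u a l2 l3) mod 2"
      unfolding hh_def eq snd_conv bits3[OF r1] by (rule div2w)
    then show ?thesis using False by simp
  qed
qed

definition Hs :: "tterm \<Rightarrow> nat \<Rightarrow> int" where
  "Hs t a = hh t a 0 1 + hh t a 1 0 + hh t a 1 1"

definition Qs :: "tterm \<Rightarrow> tterm \<Rightarrow> tterm \<Rightarrow> int" where
  "Qs s t u = qq (lw s 0 1) (lw t 0 1) (lw u 0 1) + qq (lw s 1 0) (lw t 1 0) (lw u 1 0)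
            + qq (lw s 1 1) (lw t 1 1) (lw u 1 1)"

lemma Hs_op: "Hs (Op i s t u) a mod 2 = (Hs s a + Hs t a + Hs u a + (if a = i then Qs s t u else 0)) mod 2"
proof -
  have "Hs (Op i s t u) a mod 2 = (hh (Op i s t u) a 0 1 mod 2 + hh (Op i s t u) a 1 0 mod 2 + hh (Op i s t u) a 1 1 mod 2) mod 2"
    unfolding Hs_def by (rule mod3[symmetric])
  also have "\<dots> = ((hh s a 0 1 + hh t a 0 1 + hh u a 0 1 +
      (if a = i then qq (lw s 0 1) (lw t 0 1) (lw u 0 1) else 0)) mod 2 +
     (hh s a 1 0 + hh t a 1 0 + hh u a 1 0 +
      (if a = i then qq (lw s 1 0) (lw t 1 0) (lw u 1 0) else 0)) mod 2 +
     (hh s a 1 1 + hh t a 1 1 + hh u a 1 1 +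
      (if a = i then qq (lw s 1 1) (lw t 1 1) (lw u 1 1) else 0)) mod 2) mod 2"
    using hh_op[of 0 1] hh_op[of 1 0] hh_op[of 1 1] by simp
  also have "\<dots> = ((hh s a 0 1 + hh t a 0 1 + hh u a 0 1 +
      (if a = i then qq (lw s 0 1) (lw t 0 1) (lw u 0 1) else 0)) +
     (hh s a 1 0 + hh t a 1 0 + hh u a 1 0 +
      (if a = i then qq (lw s 1 0) (lw t 1 0) (lw u 1 0) else 0)) +
     (hh s a 1 1 + hh t a 1 1 + hh u a 1 1 +
      (if a = i then qq (lw s 1 1) (lw t 1 1) (lw u 1 1) else 0))) mod 2"
    by (rule mod3)
  also have "\<dots> = (Hs s a + Hs t a + Hs u a + (if a = i then Qs s t u else 0)) mod 2"
    by (rule arg_cong[where f="\<lambda>x. x mod 2"]) (cases "a = i"; simp add: Hs_def Qs_def)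
  finally show ?thesis .
qed

lemma sum_mod2_cong:
  assumes "\<And>x. x \<in> A \<Longrightarrow> (f x :: int) mod 2 = g x mod 2"
  shows "sum f A mod 2 = sum g A mod 2"
proof -
  have "sum f A mod 2 = (\<Sum>x\<in>A. f x mod 2) mod 2" by (simp add: mod_sum_eq)
  also have "\<dots> = (\<Sum>x\<in>A. g x mod 2) mod 2" using assms by simp
  also have "\<dots> = sum g A mod 2" by (simp add: mod_sum_eq)
  finally show ?thesis .
qed

lemma key2: "(cy s*cz s + cy t*cz t + cy u*cz u + Qs s t u) mod 2 =
   (((cy s+cy t+cy u) mod 2) * ((cz s+cz t+cz u) mod 2)) mod 2"
  using cy01[of s] cy01[of t] cy01[of u] cz01[of s] cz01[of t] cz01[of u]
  unfolding Qs_def lw_def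
  by (elim insertE emptyE) (simp_all add: qq_def)

lemma invariant:
  assumes "wf_term n t"
  shows "(\<Sum>a\<in>{1..n}. Hs t a) mod 2 = (cy t * cz t) mod 2"
  using assms
proof (induction t)
  case VX
  then show ?case by (simp add: Hs_def hh_def ev_def)
next
  case VY
  then show ?case by (simp add: Hs_def hh_def ev_def)
next
  case VZ
  then show ?case by (simp add: Hs_def hh_def ev_def)
next
  case (Op i s t u)
  then have i: "i \<in> {1..n}" and ws: "wf_term n s" "wf_term n t" "wf_term n u" by auto
  have "(\<Sum>a\<in>{1..n}. Hs (Op i s t u) a) mod 2 =
        (\<Sum>a\<in>{1..n}. Hs s a + Hs t a + Hs u a + (if a = i then Qs s t u else 0)) mod 2"
    by (rule sum_mod2_cong) (simp add: Hs_op)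
  also have "\<dots> = ((\<Sum>a\<in>{1..n}. Hs s a) + (\<Sum>a\<in>{1..n}. Hs t a) + (\<Sum>a\<in>{1..n}. Hs u a) + Qs s t u) mod 2"
    using i by (simp add: sum.distrib)
  also have "\<dots> = ((\<Sum>a\<in>{1..n}. Hs s a) mod 2 + (\<Sum>a\<in>{1..n}. Hs t a) mod 2 + (\<Sum>a\<in>{1..n}. Hs u a) mod 2 + Qs s t u) mod 2"
    by (rule mod4[symmetric])
  also have "\<dots> = (cy s * cz s + cy t * cz t + cy u * cz u + Qs s t u) mod 2"
  proof -
    have "(\<Sum>a\<in>{1..n}. Hs s a) mod 2 = cy s * cz s mod 2"
      "(\<Sum>a\<in>{1..n}. Hs t a) mod 2 = cy t * cz t mod 2"
      "(\<Sum>a\<in>{1..n}. Hs u a) mod 2 = cy u * cz u mod 2" using Op.IH ws by auto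
    then show ?thesis by (simp only: mod4)
  qed
  also have "\<dots> = (cy (Op i s t u) * cz (Op i s t u)) mod 2"
    unfolding cy.simps cz.simps by (rule key2)
  finally show ?case .
qed

theorem proposition5p4:
  fixes n :: nat
  assumes "odd n" and "n > 1"
  shows "\<not> (\<exists>t. is_minority_term n t)"
proof
  assume "\<exists>t. is_minority_term n t"
  then obtain t where wf: "wf_term n t" and mt: "\<forall>x\<in>carrierA n. \<forall>y\<in>carrierA n.
        eval t y x x = y \<and> eval t x y x = y \<and> eval t x x y = y"
    unfolding is_minority_term_def by blast
  have h0: "Hs t a = 0" if a: "a \<in> {1..n}" for a
  proof -
    have c0: "(a, 0::int) \<in> carrierA n" and c1: "(a, 1::int) \<in> carrierA n"
      using a by (auto simp: carrierA_def)
    have "eval t (a,0) (a,0) (a,1) = (a,1)" using mt c0 c1 by blast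
    moreover have "eval t (a,0) (a,1) (a,0) = (a,1)" using mt c0 c1 by blast
    moreover have "eval t (a,0) (a,1) (a,1) = (a,0)" using mt c0 c1 by blast
    ultimately show ?thesis by (simp add: Hs_def hh_def ev_def)
  qed
  have "(1::nat) \<in> {1..n}" using assms by auto
  then have c0: "((1::nat), 0::int) \<in> carrierA n" and c1: "((1::nat), 1::int) \<in> carrierA n"
    by (auto simp: carrierA_def)
  have "eval t (1,0) (1,1) (1,0) = ((1::nat),1::int)" using mt c0 c1 by blast
  then have "(cy t * 1 + cz t * 0) mod 2 = 1" using evA[of 1 0 t 1] by (simp add: ev_def)
  then have y: "cy t = 1" using cy01[of t] by auto
  have "eval t (1,0) (1,0) (1,1) = ((1::nat),1::int)" using mt c0 c1 by blast
  then have "(cy t * 0 + cz t * 1) mod 2 = 1" using evA[of 0 1 t 1] by (simp add: ev_def)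
  then have z: "cz t = 1" using cz01[of t] by auto
  have "(\<Sum>a\<in>{1..n}. Hs t a) = 0" using h0 by simp
  with invariant[OF wf] y z show False by simp
qed

end
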